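(* Let $T$ be the Syracuse map on odd positive integers. For odd $n$, the valuation sequence $a_j(n)=v_2(3T^j(n)+1)$ ($j\ge 0$) decomposes uniquely into consecutive blocks $(1,\ldots,1,r_i)$, $i=1,2,\ldots$, consisting of $L_i\ge 0$ entries equal to $1$ followed by one entry $r_i\ge 2$ (a "run-compensate cycle"). Write $n^{(k)}=T^{L_1+\cdots+L_k+k}(n)$ for the value after $k$ complete cycles, and let $\mathcal N_k=\{n \text{ odd}: n^{(k)}\ge n\}$. Let $X=(L+1)\log_2 3-(L+r)$, where $L$ and $r$ are independent random variables with $\Pr(L=\ell)=2^{-(\ell+1)}$ for $\ell\ge 0$ and $\Pr(r=k)=2^{-(k-1)}$ for $k\ge 2$, let $M_X(t)=\mathbb E[e^{tX}]$, and let $I(0)=\sup_t\{-\log M_X(t)\}$ (the Cramér rate function of $X$ at $0$; numerically $I(0)\approx 0.1465$). Then for every $k\ge 1$ the upper natural density of $\mathcal N_k$ within the odd positive integers satisfies $\overline d(\mathcal N_k)\le e^{-I(0)k}$. Consequently $\overline d\bigl(\bigcap_{k\ge 1}\mathcal N_k\bigr)=0$.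
   Context: $T(n)=(3n+1)/2^{v_2(3n+1)}$ for odd $n$; $v_2$ is the $2$-adic valuation; $T^j$ is the $j$-th iterate. Natural/upper density is taken relative to the set of odd positive integers. *)

theory Defs
  imports "HOL-Analysis.Analysis" "HOL-Computational_Algebra.Primes"
begin

definition v2 :: "nat \<Rightarrow> nat" where
  "v2 m = multiplicity (2::nat) m"

definition syr :: "nat \<Rightarrow> nat" where
  "syr n = (3*n+1) div 2 ^ v2 (3*n+1)"

definition aval :: "nat \<Rightarrow> nat \<Rightarrow> nat" where
  "aval n j = v2 (3 * (syr ^^ j) n + 1)"

text \<open>Number of Syracuse steps after k complete run-compensate cycles:
  cyc_steps n k = L_1 + ... + L_k + k.  The (k+1)-st cycle ends at the
  first index j >= cyc_steps n k with a_j(n) >= 2.\<close>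
fun cyc_steps :: "nat \<Rightarrow> nat \<Rightarrow> nat" where
  "cyc_steps n 0 = 0"
| "cyc_steps n (Suc k) = Suc (LEAST j. cyc_steps n k \<le> j \<and> 2 \<le> aval n j)"

definition after_cycles :: "nat \<Rightarrow> nat \<Rightarrow> nat" where
  "after_cycles n k = (syr ^^ cyc_steps n k) n"

definition Nset :: "nat \<Rightarrow> nat set" where
  "Nset k = {n. odd n \<and> after_cycles n k \<ge> n}"

definition upper_density_odd :: "nat set \<Rightarrow> ereal" where
  "upper_density_odd A = limsup (\<lambda>N. ereal (real (card {n \<in> A. odd n \<and> n \<le> N})
                                         / real (card {n. odd n \<and> n \<le> N})))"

text \<open>M_X(t) = E[exp(t X)], X = (L+1) log_2 3 - (L+r), L, r independent,
  P(L=l) = 2^-(l+1) (l >= 0), P(r = k+2) = 2^-(k+1) (k >= 0).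
  Valued in [0,\<infinity>] (may be infinite).\<close>
definition MX :: "real \<Rightarrow> ennreal" where
  "MX t = (\<Sum>l. \<Sum>k. ennreal ((1/2) ^ (l+1) * (1/2) ^ (k+1) *
        exp (t * ((real l + 1) * log 2 3 - (real l + real (k+2))))))"

text \<open>Cramer rate at 0: I(0) = sup_t (- log M_X(t)); t with M_X(t) = \<infinity>
  contribute -\<infinity> and are omitted.\<close>
definition I0 :: real where
  "I0 = (SUP t \<in> {t. MX t < \<infinity>}. - ln (enn2real (MX t)))"

end

theory Submission
  imports Defs "HOL-Number_Theory.Cong"
begin

lemma v2_dvd: "2 ^ v2 m dvd m"
  unfolding v2_def by (rule multiplicity_dvd)

lemma v2_ndvd: "m > 0 \<Longrightarrow> \<not> 2 ^ Suc (v2 m) dvd m"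
  unfolding v2_def using power_dvd_iff_le_multiplicity[where p="2::nat" and x=m and n="Suc (multiplicity 2 m)"]
  by simp

lemma v2_eqI: "2 ^ a dvd m \<Longrightarrow> \<not> 2 ^ Suc a dvd m \<Longrightarrow> v2 m = a"
  unfolding v2_def by (rule multiplicity_eqI)

lemma v2_ge1: "odd n \<Longrightarrow> 1 \<le> v2 (3*n+1)"
proof -
  assume "odd n"
  hence "2 ^ 1 dvd 3*n+1" by simp
  thus ?thesis unfolding v2_def using power_dvd_iff_le_multiplicity[where p="2::nat" and x="3*n+1" and n=1] by simp
qed

lemma syr_eq: "2 ^ v2 (3*n+1) * syr n = 3*n+1"
  unfolding syr_def using v2_dvd[of "3*n+1"] by simp

lemma syr_odd: "odd (syr n)"
proof
  assume "even (syr n)"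
  then obtain q where q: "syr n = 2*q" by blast
  have "2 ^ Suc (v2 (3*n+1)) dvd 3*n+1"
    using syr_eq[of n] q by (metis dvd_triv_left mult.assoc mult.commute power_Suc)
  thus False using v2_ndvd[of "3*n+1"] by simp
qed

lemma syr_pow_odd: "odd n \<Longrightarrow> odd ((syr ^^ j) n)"
  by (cases j) (auto simp: syr_odd)

lemma aval_shift: "aval ((syr ^^ i) n) j = aval n (i + j)"
  unfolding aval_def by (metis add.commute comp_apply funpow_add)

lemma aval_Suc: "aval n (Suc j) = aval (syr n) j"
  unfolding aval_def by (simp add: funpow_Suc_right del: funpow.simps)

lemma aval_ge1: "odd n \<Longrightarrow> 1 \<le> aval n j"
  unfolding aval_def using v2_ge1 syr_pow_odd by blast

lemma aval0: "aval n 0 = v2 (3*n+1)"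
  unfolding aval_def by simp

lemma ones_step: "odd x \<Longrightarrow> aval x 0 = 1 \<Longrightarrow> 2 * (syr x + 1) = 3 * (x + 1)"
  using syr_eq[of x] by (simp add: aval0)

lemma ones_iter: "odd m \<Longrightarrow> (\<forall>i<j. aval m i = 1) \<Longrightarrow> 2^j * ((syr^^j) m + 1) = 3^j * (m+1)"
proof (induction j)
  case 0 then show ?case by simp
next
  case (Suc j)
  have h: "2^j * ((syr^^j) m + 1) = 3^j * (m+1)" using Suc by auto
  have "aval ((syr^^j) m) 0 = 1" using Suc.prems(2) aval_shift[of j m 0] by simp
  hence "2 * ((syr^^(Suc j)) m + 1) = 3 * ((syr^^j) m + 1)"
    using ones_step[of "(syr^^j) m"] syr_pow_odd[OF Suc.prems(1)] by simp
  hence "2^Suc j * ((syr^^(Suc j)) m + 1) = 3 * (2^j * ((syr^^j) m + 1))"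
    by (metis (no_types, lifting) mult.assoc mult.left_commute power_Suc)
  also have "\<dots> = 3^Suc j * (m+1)" using h by simp
  finally show ?case .
qed

lemma exists_big: "odd m \<Longrightarrow> \<exists>i. 2 \<le> aval m i"
proof (rule ccontr)
  assume o: "odd m" and "\<not> (\<exists>i. 2 \<le> aval m i)"
  hence all: "\<forall>i. aval m i = 1" using aval_ge1[OF o] by (metis le_antisym not_less_eq_eq numeral_2_eq_2 One_nat_def)
  let ?j = "m+1"
  have "2^?j * ((syr^^?j) m + 1) = 3^?j * (m+1)" using ones_iter[OF o] all by blast
  hence "2^?j dvd 3^?j * (m+1)" by (metis dvd_triv_left)
  moreover have "coprime ((2::nat)^?j) (3^?j)" by simp
  ultimately have "2^?j dvd m+1" using coprime_dvd_mult_right_iff by blast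
  hence "2^?j \<le> m+1" by (simp add: dvd_imp_le)
  moreover have "m+1 < 2^?j" by (rule less_exp)
  ultimately show False by simp
qed


lemma exists_big_ge: "odd n \<Longrightarrow> \<exists>j. c \<le> j \<and> 2 \<le> aval n j"
proof -
  assume "odd n"
  then obtain i where "2 \<le> aval ((syr^^c) n) i" using exists_big syr_pow_odd by blast
  thus ?thesis using aval_shift[of c n i] by (intro exI[of _ "c+i"]) simp
qed

lemma cyc_step_lift:
  assumes o: "odd n" and h: "cyc_steps n K0 = Suc (cyc_steps (syr n) K1)"
  shows "cyc_steps n (Suc K0) = Suc (cyc_steps (syr n) (Suc K1))"
proof -
  let ?P = "\<lambda>j. cyc_steps n K0 \<le> j \<and> 2 \<le> aval n j"
  obtain j where "?P j" using exists_big_ge[OF o] by blast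
  moreover have "\<not> ?P 0" using h by simp
  ultimately have "(LEAST j. ?P j) = Suc (LEAST m. ?P (Suc m))" by (rule Least_Suc)
  moreover have "(\<lambda>m. ?P (Suc m)) = (\<lambda>m. cyc_steps (syr n) K1 \<le> m \<and> 2 \<le> aval (syr n) m)"
    using h by (simp add: aval_Suc)
  ultimately show ?thesis by simp
qed

lemma cyc_rec1: "odd n \<Longrightarrow> aval n 0 = 1 \<Longrightarrow> cyc_steps n (Suc k) = Suc (cyc_steps (syr n) (Suc k))"
proof (induction k)
  case 0
  let ?P = "\<lambda>j. 2 \<le> aval n j"
  obtain j where "?P j" using exists_big[OF 0(1)] by blast
  moreover have "\<not> ?P 0" using 0 by simp
  ultimately have "(LEAST j. ?P j) = Suc (LEAST m. ?P (Suc m))" by (rule Least_Suc)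
  thus ?case by (simp add: aval_Suc)
next
  case (Suc k)
  then show ?case using cyc_step_lift by blast
qed

lemma cyc_rec2: "odd n \<Longrightarrow> 2 \<le> aval n 0 \<Longrightarrow> cyc_steps n (Suc k) = Suc (cyc_steps (syr n) k)"
proof (induction k)
  case 0
  have "(LEAST j. 2 \<le> aval n j) = 0" using 0 by (intro Least_eq_0) 
  thus ?case by simp
next
  case (Suc k)
  then show ?case using cyc_step_lift by blast
qed

definition Ac :: "nat \<Rightarrow> nat \<Rightarrow> nat" where
  "Ac n k = (\<Sum>j<cyc_steps n k. aval n j)"

definition nxt :: "nat \<Rightarrow> nat \<Rightarrow> nat" where
  "nxt n k = (if aval n 0 = 1 then k else k - 1)"

lemma cyc_rec: "odd n \<Longrightarrow> k \<ge> 1 \<Longrightarrow> cyc_steps n k = Suc (cyc_steps (syr n) (nxt n k))"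
  using cyc_rec1[of n "k-1"] cyc_rec2[of n "k-1"] aval_ge1[of n 0]
  unfolding nxt_def by (cases k) (auto simp: le_Suc_eq)

lemma Ac_rec: "odd n \<Longrightarrow> k \<ge> 1 \<Longrightarrow> Ac n k = aval n 0 + Ac (syr n) (nxt n k)"
proof -
  assume a: "odd n" "k \<ge> 1"
  show ?thesis unfolding Ac_def cyc_rec[OF a] sum.lessThan_Suc_shift aval_Suc ..
qed

lemma nxt_less: "k \<ge> 1 \<Longrightarrow> nxt n k \<le> k"
  unfolding nxt_def by auto

lemma Ac_ge: "odd n \<Longrightarrow> cyc_steps n k \<le> Ac n k"
proof -
  assume o: "odd n"
  have "(\<Sum>j<cyc_steps n k. (1::nat)) \<le> Ac n k" unfolding Ac_def
    by (rule sum_mono) (rule aval_ge1[OF o])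
  thus ?thesis by simp
qed

lemma Ac0: "Ac n 0 = 0" unfolding Ac_def by simp


lemma step_cong:
  assumes ox: "odd x" and oy: "odd y" and m: "x mod 2^e = y mod 2^e" and lt: "aval x 0 < e"
  shows "aval y 0 = aval x 0 \<and> syr x mod 2^(e - aval x 0) = syr y mod 2^(e - aval x 0)"
proof -
  define a where "a = aval x 0"
  have m3: "(3*x+1) mod 2^e = (3*y+1) mod 2^e" using m by (metis mod_add_cong mod_mult_right_eq)
  have ax: "v2 (3*x+1) = a" unfolding a_def aval0 ..
  have d1: "2^a dvd 3*x+1" using v2_dvd[of "3*x+1"] ax by simp
  have d2: "\<not> 2^Suc a dvd 3*x+1" using v2_ndvd[of "3*x+1"] ax by simp
  have e1: "(2::nat)^a dvd 2^e" using lt a_def by (simp add: le_imp_power_dvd)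
  have e2: "(2::nat)^Suc a dvd 2^e" using lt a_def by (intro le_imp_power_dvd) simp
  have "2^a dvd 3*y+1" using d1 e1 m3 by (metis dvd_mod_iff)
  moreover have "\<not> 2^Suc a dvd 3*y+1" using d2 e2 m3 by (metis dvd_mod_iff)
  ultimately have ay: "v2 (3*y+1) = a" by (rule v2_eqI)
  have sx: "2^a * syr x = 3*x+1" using syr_eq[of x] ax by simp
  have sy: "2^a * syr y = 3*y+1" using syr_eq[of y] ay by simp
  have pe: "(2::nat)^e = 2^a * 2^(e-a)" using lt a_def by (simp add: power_add[symmetric])
  have "(2^a * syr x) mod (2^a * 2^(e-a)) = (2^a * syr y) mod (2^a * 2^(e-a))"
    using m3 sx sy pe by simp
  hence "2^a * (syr x mod 2^(e-a)) = 2^a * (syr y mod 2^(e-a))" by (simp only: mod_mult_mult1)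
  hence "syr x mod 2^(e-a) = syr y mod 2^(e-a)" by simp
  thus ?thesis using ay a_def by (simp add: aval0)
qed

lemma per_main:
  "\<forall>k x y. odd x \<longrightarrow> odd y \<longrightarrow> x mod 2^e = y mod 2^e \<longrightarrow> Ac x k < e \<longrightarrow>
     cyc_steps y k = cyc_steps x k \<and> Ac y k = Ac x k"
proof (induction e rule: less_induct)
  case (less e)
  show ?case
  proof (intro allI impI)
    fix k x y assume ox: "odd x" and oy: "odd y" and m: "x mod 2^e = y mod 2^e" and lt: "Ac x k < e"
    show "cyc_steps y k = cyc_steps x k \<and> Ac y k = Ac x k"
    proof (cases "k = 0")
      case True then show ?thesis by (simp add: Ac0)
    next
      case False
      hence k1: "k \<ge> 1" by simp
      define a where "a = aval x 0"
      have a1: "1 \<le> a" using aval_ge1[OF ox] a_def by simp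
      have rx: "Ac x k = a + Ac (syr x) (nxt x k)" using Ac_rec[OF ox k1] a_def by simp
      have alt: "aval x 0 < e" using rx lt a_def by simp
      from step_cong[OF ox oy m alt] have ay: "aval y 0 = a" and 
        sm: "syr x mod 2^(e - a) = syr y mod 2^(e - a)" using a_def by auto
      have nn: "nxt y k = nxt x k" unfolding nxt_def using ay a_def by simp
      have lt2: "Ac (syr x) (nxt x k) < e - a" using rx lt by simp
      have "e - a < e" using a1 alt a_def by simp
      note IH = less.IH[OF this, rule_format, OF syr_odd[of x] syr_odd[of y] sm lt2]
      show ?thesis using cyc_rec[OF ox k1] cyc_rec[OF oy k1] Ac_rec[OF oy k1] rx ay nn IH by simp
    qed
  qed
qed

lemma per:
  "odd x \<Longrightarrow> odd y \<Longrightarrow> x mod 2^e = y mod 2^e \<Longrightarrow> Ac x k < e \<Longrightarrow>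
     cyc_steps y k = cyc_steps x k \<and> Ac y k = Ac x k"
  using per_main by blast

lemma per_iff:
  assumes "odd x" "odd y" "x mod 2^e = y mod 2^e"
  shows "Ac x k < e \<longleftrightarrow> Ac y k < e"
proof
  assume "Ac x k < e" thus "Ac y k < e" using per[OF assms] by simp
next
  assume "Ac y k < e" thus "Ac x k < e" using per[OF assms(2,1) assms(3)[symmetric]] by simp
qed

definition wt :: "real \<Rightarrow> nat \<Rightarrow> nat \<Rightarrow> real" where
  "wt t k n = exp (t * (real (cyc_steps n k) * log 2 3 - real (Ac n k)))"

definition Wt :: "real \<Rightarrow> nat \<Rightarrow> nat \<Rightarrow> nat \<Rightarrow> real" where
  "Wt t k D n = (if Ac n k < D then wt t k n else 0)"

definition Tl :: "nat \<Rightarrow> nat \<Rightarrow> nat \<Rightarrow> real" where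
  "Tl k D n = (if Ac n k < D then 0 else 1)"

lemma odd_mod: "odd (x::nat) \<Longrightarrow> D \<ge> 1 \<Longrightarrow> odd (x mod 2^D)"
proof -
  assume a: "odd x" "D \<ge> 1"
  have "(2::nat) dvd 2^D" using a(2) by (simp add: dvd_power)
  hence "x mod 2^D mod 2 = x mod 2" by (rule mod_mod_cancel)
  thus ?thesis using a(1) by (simp add: odd_iff_mod_2_eq_one)
qed

lemma Wt_per: "odd x \<Longrightarrow> D \<ge> 1 \<Longrightarrow> Wt t k D (x mod 2^D) = Wt t k D x"
proof -
  assume o: "odd x" "D \<ge> 1"
  have o2: "odd (x mod 2^D)" using odd_mod[OF o] .
  have m: "x mod 2^D = (x mod 2^D) mod 2^D" by simp
  show ?thesis
  proof (cases "Ac x k < D")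
    case True
    then show ?thesis unfolding Wt_def wt_def using per[OF o(1) o2 m True] by simp
  next
    case False
    then show ?thesis unfolding Wt_def using per_iff[OF o(1) o2 m] by simp
  qed
qed

lemma Tl_per: "odd x \<Longrightarrow> D \<ge> 1 \<Longrightarrow> Tl k D (x mod 2^D) = Tl k D x"
proof -
  assume o: "odd x" "D \<ge> 1"
  have o2: "odd (x mod 2^D)" using odd_mod[OF o] .
  have m: "x mod 2^D = (x mod 2^D) mod 2^D" by simp
  show ?thesis unfolding Tl_def using per_iff[OF o(1) o2 m] by simp
qed



definition Od :: "nat \<Rightarrow> nat set" where "Od D = {\<rho>. \<rho> < 2^D \<and> odd \<rho>}"

lemma finite_Od[simp]: "finite (Od D)" unfolding Od_def by simp

lemma inj3: "x < 2^D \<Longrightarrow> y < (2::nat)^D \<Longrightarrow> (3*x+1) mod 2^D = (3*y+1) mod 2^D \<Longrightarrow> x = y"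
proof -
  assume a: "x < 2^D" "y < (2::nat)^D" "(3*x+1) mod 2^D = (3*y+1) mod 2^D"
  hence "[3*x+1 = 3*y+1] (mod 2^D)" by (simp add: cong_def)
  hence "[3*x = 3*y] (mod 2^D)" using cong_add_rcancel_nat[of "3*x" 1 "3*y" "2^D"] by simp
  moreover have "coprime (3::nat) (2^D)" by simp
  ultimately have "[x = y] (mod 2^D)" using cong_mult_lcancel_nat by blast
  thus ?thesis using a cong_less_imp_eq_nat by blast
qed

lemma syr_mod_3:
  assumes "aval x 0 = a" "a \<le> D"
  shows "(3*x+1) mod 2^D = 2^a * (syr x mod 2^(D-a))"
proof -
  have "2^a * syr x = 3*x+1" using syr_eq[of x] assms by (simp add: aval0)
  moreover have "(2::nat)^D = 2^a * 2^(D-a)" using assms by (simp add: power_add[symmetric])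
  ultimately show ?thesis by (metis mod_mult_mult1)
qed

lemma step_sum:
  assumes aD: "a < D" and g: "\<And>\<sigma>. 0 \<le> g \<sigma>"
  shows "(\<Sum>\<rho>\<in>{\<rho>\<in>Od D. aval \<rho> 0 = a}. g (syr \<rho> mod 2^(D-a))) \<le> (\<Sum>\<sigma>\<in>Od (D-a). (g \<sigma> :: real))"
proof -
  define S where "S = {\<rho>\<in>Od D. aval \<rho> 0 = a}"
  define h where "h = (\<lambda>\<rho>. syr \<rho> mod 2^(D-a))"
  have inj: "inj_on h S"
  proof
    fix x y assume x: "x \<in> S" and y: "y \<in> S" and e: "h x = h y"
    have "(3*x+1) mod 2^D = (3*y+1) mod 2^D"
      using syr_mod_3[of x a D] syr_mod_3[of y a D] x y e aD unfolding S_def h_def by simp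
    thus "x = y" using inj3 x y unfolding S_def Od_def by blast
  qed
  have sub: "h ` S \<subseteq> Od (D-a)"
  proof
    fix z assume "z \<in> h ` S"
    then obtain x where z: "z = syr x mod 2^(D-a)" unfolding h_def by blast
    have "odd z" using z odd_mod[OF syr_odd[of x], of "D-a"] aD by simp
    moreover have "z < 2^(D-a)" using z by simp
    ultimately show "z \<in> Od (D-a)" unfolding Od_def by simp
  qed
  have "(\<Sum>\<rho>\<in>S. g (h \<rho>)) = (\<Sum>\<sigma>\<in>h ` S. g \<sigma>)" using sum.reindex[OF inj, of g] by simp
  also have "\<dots> \<le> (\<Sum>\<sigma>\<in>Od (D-a). g \<sigma>)" using sub g by (intro sum_mono2) auto
  finally show ?thesis unfolding S_def h_def .
qed

lemma top_card: "card {\<rho>\<in>Od D. D \<le> aval \<rho> 0} \<le> 1"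
proof -
  have "\<forall>x\<in>{\<rho>\<in>Od D. D \<le> aval \<rho> 0}. \<forall>y\<in>{\<rho>\<in>Od D. D \<le> aval \<rho> 0}. x = y"
  proof (intro ballI)
    fix x y assume x: "x \<in> {\<rho>\<in>Od D. D \<le> aval \<rho> 0}" and y: "y \<in> {\<rho>\<in>Od D. D \<le> aval \<rho> 0}"
    have "2^D dvd 3*x+1" using x v2_dvd[of "3*x+1"] by (metis aval0 le_imp_power_dvd dvd_trans mem_Collect_eq)
    moreover have "2^D dvd 3*y+1" using y v2_dvd[of "3*y+1"] by (metis aval0 le_imp_power_dvd dvd_trans mem_Collect_eq)
    ultimately have "(3*x+1) mod 2^D = (3*y+1) mod 2^D" by simp
    thus "x = y" using inj3 x y unfolding Od_def by blast
  qed
  thus ?thesis using card_le_Suc0_iff_eq[of "{\<rho>\<in>Od D. D \<le> aval \<rho> 0}"] by simp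
qed

lemma split_sum:
  assumes D: "D \<ge> 1"
  shows "(\<Sum>\<rho>\<in>Od D. f \<rho>) = (\<Sum>\<rho>\<in>{\<rho>\<in>Od D. D \<le> aval \<rho> 0}. f \<rho>) +
           (\<Sum>a\<in>{1..<D}. \<Sum>\<rho>\<in>{\<rho>\<in>Od D. aval \<rho> 0 = a}. (f \<rho> :: real))"
proof -
  define g where "g = (\<lambda>\<rho>. min (aval \<rho> 0) D)"
  have im: "g ` Od D \<subseteq> {1..D}" unfolding g_def Od_def using aval_ge1 D by auto
  have "(\<Sum>\<rho>\<in>Od D. f \<rho>) = (\<Sum>y\<in>{1..D}. \<Sum>\<rho>\<in>{x. x \<in> Od D \<and> g x = y}. f \<rho>)"
    using sum.group[OF finite_Od _ im, of f] by simp
  also have "{1..D} = insert D {1..<D}" using D by auto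
  also have "(\<Sum>y\<in>insert D {1..<D}. \<Sum>\<rho>\<in>{x. x \<in> Od D \<and> g x = y}. f \<rho>) =
      (\<Sum>\<rho>\<in>{x. x \<in> Od D \<and> g x = D}. f \<rho>) + (\<Sum>y\<in>{1..<D}. \<Sum>\<rho>\<in>{x. x \<in> Od D \<and> g x = y}. f \<rho>)"
    by simp
  also have "{x. x \<in> Od D \<and> g x = D} = {\<rho>\<in>Od D. D \<le> aval \<rho> 0}" unfolding g_def by auto
  also have "(\<Sum>y\<in>{1..<D}. \<Sum>\<rho>\<in>{x. x \<in> Od D \<and> g x = y}. f \<rho>) = 
     (\<Sum>a\<in>{1..<D}. \<Sum>\<rho>\<in>{\<rho>\<in>Od D. aval \<rho> 0 = a}. f \<rho>)"
  proof (rule sum.cong)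
    fix y assume "y \<in> {1..<D}"
    hence "{x. x \<in> Od D \<and> g x = y} = {\<rho>\<in>Od D. aval \<rho> 0 = y}" unfolding g_def by auto
    thus "(\<Sum>\<rho>\<in>{x. x \<in> Od D \<and> g x = y}. f \<rho>) = (\<Sum>\<rho>\<in>{\<rho>\<in>Od D. aval \<rho> 0 = y}. f \<rho>)" by simp
  qed simp
  finally show ?thesis .
qed


lemma Wt_step:
  assumes o: "odd \<rho>" and k: "k \<ge> 1" and aD: "aval \<rho> 0 < D"
  shows "Wt t k D \<rho> = exp (t * (log 2 3 - real (aval \<rho> 0))) *
           Wt t (nxt \<rho> k) (D - aval \<rho> 0) (syr \<rho> mod 2^(D - aval \<rho> 0))"
proof -
  define a where "a = aval \<rho> 0"
  define k' where "k' = nxt \<rho> k"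
  have A: "Ac \<rho> k = a + Ac (syr \<rho>) k'" using Ac_rec[OF o k] a_def k'_def by simp
  have K: "cyc_steps \<rho> k = Suc (cyc_steps (syr \<rho>) k')" using cyc_rec[OF o k] k'_def by simp
  have D1: "D - a \<ge> 1" using aD a_def by simp
  have per': "Wt t k' (D - a) (syr \<rho> mod 2^(D - a)) = Wt t k' (D - a) (syr \<rho>)"
    by (rule Wt_per[OF syr_odd D1])
  have iff: "Ac \<rho> k < D \<longleftrightarrow> Ac (syr \<rho>) k' < D - a" using A aD a_def by auto
  have "wt t k \<rho> = exp (t * (log 2 3 - real a)) * wt t k' (syr \<rho>)"
    unfolding wt_def A K by (simp add: exp_add[symmetric] algebra_simps)
  hence "Wt t k D \<rho> = exp (t * (log 2 3 - real a)) * Wt t k' (D - a) (syr \<rho>)"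
    unfolding Wt_def using iff by simp
  thus ?thesis using per' a_def k'_def by simp
qed

lemma Tl_step:
  assumes o: "odd \<rho>" and k: "k \<ge> 1" and aD: "aval \<rho> 0 < D"
  shows "Tl k D \<rho> = Tl (nxt \<rho> k) (D - aval \<rho> 0) (syr \<rho> mod 2^(D - aval \<rho> 0))"
proof -
  define a where "a = aval \<rho> 0"
  define k' where "k' = nxt \<rho> k"
  have A: "Ac \<rho> k = a + Ac (syr \<rho>) k'" using Ac_rec[OF o k] a_def k'_def by simp
  have D1: "D - a \<ge> 1" using aD a_def by simp
  have per': "Tl k' (D - a) (syr \<rho> mod 2^(D - a)) = Tl k' (D - a) (syr \<rho>)"
    by (rule Tl_per[OF syr_odd D1])
  have iff: "Ac \<rho> k < D \<longleftrightarrow> Ac (syr \<rho>) k' < D - a" using A aD a_def by auto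
  have "Tl k D \<rho> = Tl k' (D - a) (syr \<rho>)"
    unfolding Tl_def using iff by simp
  thus ?thesis using per' a_def k'_def by simp
qed

lemma Wt_nonneg: "0 \<le> Wt t k D n" unfolding Wt_def wt_def by simp
lemma Tl_nonneg: "0 \<le> Tl k D n" unfolding Tl_def by simp

lemma Ac_ge_aval: "odd \<rho> \<Longrightarrow> k \<ge> 1 \<Longrightarrow> aval \<rho> 0 \<le> Ac \<rho> k"
  using Ac_rec by fastforce

definition SW :: "real \<Rightarrow> nat \<Rightarrow> nat \<Rightarrow> real" where
  "SW t k D = (\<Sum>\<rho>\<in>Od D. Wt t k D \<rho>)"
definition ST :: "nat \<Rightarrow> nat \<Rightarrow> real" where
  "ST k D = (\<Sum>\<rho>\<in>Od D. Tl k D \<rho>)"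

lemma class_sum_W:
  assumes k: "k \<ge> 1" and a: "1 \<le> a" "a < D"
  shows "(\<Sum>\<rho>\<in>{\<rho>\<in>Od D. aval \<rho> 0 = a}. Wt t k D \<rho>) \<le>
         exp (t * (log 2 3 - real a)) * SW t (if a = 1 then k else k - 1) (D - a)"
proof -
  define k' where "k' = (if a = 1 then k else k - 1)"
  have "(\<Sum>\<rho>\<in>{\<rho>\<in>Od D. aval \<rho> 0 = a}. Wt t k D \<rho>) =
        (\<Sum>\<rho>\<in>{\<rho>\<in>Od D. aval \<rho> 0 = a}. exp (t * (log 2 3 - real a)) * Wt t k' (D - a) (syr \<rho> mod 2^(D-a)))"
  proof (rule sum.cong)
    fix \<rho> assume r: "\<rho> \<in> {\<rho>\<in>Od D. aval \<rho> 0 = a}"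
    hence o: "odd \<rho>" and av: "aval \<rho> 0 = a" unfolding Od_def by auto
    have "nxt \<rho> k = k'" unfolding nxt_def k'_def using av by simp
    thus "Wt t k D \<rho> = exp (t * (log 2 3 - real a)) * Wt t k' (D - a) (syr \<rho> mod 2^(D-a))"
      using Wt_step[OF o k, of D t] av a by simp
  qed simp
  also have "\<dots> = exp (t * (log 2 3 - real a)) * (\<Sum>\<rho>\<in>{\<rho>\<in>Od D. aval \<rho> 0 = a}. Wt t k' (D - a) (syr \<rho> mod 2^(D-a)))"
    by (simp add: sum_distrib_left)
  also have "\<dots> \<le> exp (t * (log 2 3 - real a)) * SW t k' (D - a)"
    unfolding SW_def by (intro mult_left_mono step_sum[OF a(2)] Wt_nonneg) simp
  finally show ?thesis unfolding k'_def .
qed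

lemma class_sum_T:
  assumes k: "k \<ge> 1" and a: "1 \<le> a" "a < D"
  shows "(\<Sum>\<rho>\<in>{\<rho>\<in>Od D. aval \<rho> 0 = a}. Tl k D \<rho>) \<le> ST (if a = 1 then k else k - 1) (D - a)"
proof -
  define k' where "k' = (if a = 1 then k else k - 1)"
  have "(\<Sum>\<rho>\<in>{\<rho>\<in>Od D. aval \<rho> 0 = a}. Tl k D \<rho>) =
        (\<Sum>\<rho>\<in>{\<rho>\<in>Od D. aval \<rho> 0 = a}. Tl k' (D - a) (syr \<rho> mod 2^(D-a)))"
  proof (rule sum.cong)
    fix \<rho> assume r: "\<rho> \<in> {\<rho>\<in>Od D. aval \<rho> 0 = a}"
    hence o: "odd \<rho>" and av: "aval \<rho> 0 = a" unfolding Od_def by auto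
    have "nxt \<rho> k = k'" unfolding nxt_def k'_def using av by simp
    thus "Tl k D \<rho> = Tl k' (D - a) (syr \<rho> mod 2^(D-a))"
      using Tl_step[OF o k, of D] av a by simp
  qed simp
  also have "\<dots> \<le> ST k' (D - a)"
    unfolding ST_def by (intro step_sum[OF a(2)] Tl_nonneg)
  finally show ?thesis unfolding k'_def .
qed

lemma SW_rec:
  assumes k: "k \<ge> 1" and D: "D \<ge> 1"
  shows "SW t k D \<le> (\<Sum>a\<in>{1..<D}. exp (t * (log 2 3 - real a)) * SW t (if a = 1 then k else k - 1) (D - a))"
proof -
  have top: "(\<Sum>\<rho>\<in>{\<rho>\<in>Od D. D \<le> aval \<rho> 0}. Wt t k D \<rho>) = 0"
  proof (rule sum.neutral, rule ballI)
    fix \<rho> assume "\<rho> \<in> {\<rho>\<in>Od D. D \<le> aval \<rho> 0}"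
    hence "odd \<rho>" "D \<le> aval \<rho> 0" unfolding Od_def by auto
    hence "\<not> Ac \<rho> k < D" using Ac_ge_aval[of \<rho> k] k by simp
    thus "Wt t k D \<rho> = 0" unfolding Wt_def by simp
  qed
  have "SW t k D = (\<Sum>a\<in>{1..<D}. \<Sum>\<rho>\<in>{\<rho>\<in>Od D. aval \<rho> 0 = a}. Wt t k D \<rho>)"
    unfolding SW_def using split_sum[OF D, of "Wt t k D"] top by simp
  also have "\<dots> \<le> (\<Sum>a\<in>{1..<D}. exp (t * (log 2 3 - real a)) * SW t (if a = 1 then k else k - 1) (D - a))"
    by (intro sum_mono class_sum_W[OF k]) auto
  finally show ?thesis .
qed

lemma ST_rec:
  assumes k: "k \<ge> 1" and D: "D \<ge> 1"
  shows "ST k D \<le> 1 + (\<Sum>a\<in>{1..<D}. ST (if a = 1 then k else k - 1) (D - a))"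
proof -
  have top: "(\<Sum>\<rho>\<in>{\<rho>\<in>Od D. D \<le> aval \<rho> 0}. Tl k D \<rho>) \<le> 1"
  proof -
    have "(\<Sum>\<rho>\<in>{\<rho>\<in>Od D. D \<le> aval \<rho> 0}. Tl k D \<rho>) \<le> (\<Sum>\<rho>\<in>{\<rho>\<in>Od D. D \<le> aval \<rho> 0}. 1)"
      by (intro sum_mono) (simp add: Tl_def)
    also have "\<dots> = real (card {\<rho>\<in>Od D. D \<le> aval \<rho> 0})" by simp
    also have "\<dots> \<le> 1" using top_card[of D] by simp
    finally show ?thesis .
  qed
  have "ST k D = (\<Sum>\<rho>\<in>{\<rho>\<in>Od D. D \<le> aval \<rho> 0}. Tl k D \<rho>) + (\<Sum>a\<in>{1..<D}. \<Sum>\<rho>\<in>{\<rho>\<in>Od D. aval \<rho> 0 = a}. Tl k D \<rho>)"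
    unfolding ST_def using split_sum[OF D, of "Tl k D"] by simp
  also have "\<dots> \<le> 1 + (\<Sum>a\<in>{1..<D}. ST (if a = 1 then k else k - 1) (D - a))"
    using top by (intro add_mono sum_mono class_sum_T[OF k]) auto
  finally show ?thesis .
qed



lemma geo2: assumes "0 \<le> x" "x < (1::real)" shows "(\<Sum>a\<in>{2..<D}. x^a) \<le> x^2/(1-x)"
proof (cases "D \<ge> 2")
  case True
  have "(\<Sum>a\<in>{2..<D}. x^a) = (\<Sum>i\<in>{0..<D-2}. x^(i+2))"
  proof -
    have "D = (D-2)+2" using True by simp
    hence "{2..<D} = {0+2..<(D-2)+2}" by (metis add_0)
    thus ?thesis by (simp only: sum.shift_bounds_nat_ivl)
  qed
  also have "\<dots> = x^2 * (\<Sum>i<D-2. x^i)" by (simp add: sum_distrib_left power_add atLeast0LessThan power2_eq_square algebra_simps)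
  also have "(\<Sum>i<D-2. x^i) = (1 - x^(D-2)) / (1-x)" using assms sum_gp_strict[of x "D-2"] by simp
  also have "x^2 * ((1 - x^(D-2)) / (1-x)) \<le> x^2 * (1/(1-x))"
    using assms by (intro mult_left_mono divide_right_mono) auto
  finally show ?thesis by simp
next
  case False
  hence "{2..<D} = {}" by auto
  thus ?thesis using assms by simp
qed

lemma card_odd_less: "card {n. n < M \<and> odd n} = M div 2"
proof (induction M)
  case 0 then show ?case by simp
next
  case (Suc M)
  show ?case
  proof (cases "odd M")
    case True
    have "{n. n < Suc M \<and> odd n} = insert M {n. n < M \<and> odd n}" using True less_Suc_eq by auto
    hence "card {n. n < Suc M \<and> odd n} = Suc (M div 2)" using Suc by simp
    thus ?thesis using True by presburger
  next
    case False
    have "{n. n < Suc M \<and> odd n} = {n. n < M \<and> odd n}" using False less_Suc_eq by auto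
    thus ?thesis using Suc False by presburger
  qed
qed



lemma Od0: "Od 0 = {}"
proof -
  have "\<And>x::nat. odd x \<Longrightarrow> 0 < x" by (rule odd_pos)
  thus ?thesis unfolding Od_def by auto
qed

lemma card_Od: "real (card (Od D)) \<le> 2^D/2"
proof -
  have "card (Od D) = 2^D div 2" unfolding Od_def by (rule card_odd_less)
  moreover have "real (2^D div 2) \<le> 2^D/2"
  proof -
    have "2 * (2^D div 2) \<le> (2::nat)^D" by simp
    hence "real (2 * (2^D div 2)) \<le> real ((2::nat)^D)" by (rule of_nat_mono)
    thus ?thesis by simp
  qed
  ultimately show ?thesis by simp
qed

lemma SW0: "SW t 0 D \<le> 2^D/2"
proof -
  have "SW t 0 D \<le> (\<Sum>\<rho>\<in>Od D. 1)" unfolding SW_def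
    by (intro sum_mono) (simp add: Wt_def wt_def Ac0)
  also have "\<dots> \<le> 2^D/2" using card_Od by simp
  finally show ?thesis .
qed

lemma ST0: "ST 0 D = 0"
proof (cases "D = 0")
  case True then show ?thesis unfolding ST_def by (simp add: Od0)
next
  case False then show ?thesis unfolding ST_def by (intro sum.neutral) (simp add: Tl_def Ac0)
qed

lemma exp_split: "exp (t * (c - real a)) = exp (t * c) * exp (-t) ^ a"
  by (simp add: exp_of_nat_mult[symmetric] exp_add[symmetric] algebra_simps)

lemma m_ident:
  fixes E u :: real
  assumes "u < 2" "E * u < 2"
  shows "E * u * (E * u * u / ((2 - u) * (2 - E * u))) / 2 + E * (u/2)^2 / (1 - u/2)
         = E * u * u / ((2 - u) * (2 - E * u))"
proof -
  define m where "m = E * u * u / ((2 - u) * (2 - E * u))"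
  have d1: "2 - u > 0" and d2: "2 - E * u > 0" using assms by auto
  have mm: "m = E * u * u / (2 - u) / (2 - E * u)" unfolding m_def by (simp add: divide_divide_eq_left)
  have h1: "m * (2 - E * u) = E * u * u / (2 - u)" unfolding mm using d2 by simp
  have h2: "E * (u/2)^2 / (1 - u/2) = E * u * u / (2 * (2 - u))" using d1 by (simp add: field_simps power2_eq_square)
  have "E * u * m / 2 + E * (u/2)^2 / (1 - u/2) = E * u * m / 2 + m * (2 - E * u) / 2"
    using h1 h2 by simp
  also have "\<dots> = m" by (simp add: field_simps)
  finally show ?thesis unfolding m_def .
qed

lemma sum_split1:
  fixes b :: "nat \<Rightarrow> real"
  assumes "\<And>a. 0 \<le> b a"
  shows "(\<Sum>a\<in>{1..<D}. b a) \<le> b 1 + (\<Sum>a\<in>{2..<D}. b a)"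
proof -
  have "(\<Sum>a\<in>{1..<D}. b a) \<le> (\<Sum>a\<in>insert 1 {2..<D}. b a)"
    using assms by (intro sum_mono2) auto
  also have "\<dots> = b 1 + (\<Sum>a\<in>{2..<D}. b a)" by simp
  finally show ?thesis .
qed

lemma SW_bound:
  fixes t :: real
  defines "E \<equiv> exp (t * log 2 3)" and "u \<equiv> exp (-t)"
  defines "m \<equiv> E * u * u / ((2 - u) * (2 - E * u))"
  assumes u2: "u < 2" and w2: "E * u < 2"
  shows "SW t k D \<le> 2^D/2 * m^k"
proof (induction k arbitrary: D)
  case 0 then show ?case using SW0 by simp
next
  case (Suc k0)
  have Epos: "E > 0" and upos: "u > 0" unfolding E_def u_def by simp_all
  have mpos: "m \<ge> 0" unfolding m_def using Epos upos u2 w2 by simp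
  show ?case
  proof (induction D rule: less_induct)
    case (less D)
    show ?case
    proof (cases "D = 0")
      case True then show ?thesis unfolding SW_def using mpos by (simp add: Od0)
    next
      case False
      hence D1: "D \<ge> 1" by simp
      define b where "b a = exp (t * (log 2 3 - real a)) * (2^(D-a)/2 * m^(if a = 1 then Suc k0 else k0))" for a
      have bnn: "0 \<le> b a" for a unfolding b_def using mpos by simp
      have "SW t (Suc k0) D \<le> (\<Sum>a\<in>{1..<D}. exp (t * (log 2 3 - real a)) * SW t (if a = 1 then Suc k0 else Suc k0 - 1) (D - a))"
        using SW_rec[of "Suc k0" D t] D1 by simp
      also have "\<dots> \<le> (\<Sum>a\<in>{1..<D}. b a)"
      proof (rule sum_mono)
        fix a assume a: "a \<in> {1..<D}"
        have "SW t (if a = 1 then Suc k0 else Suc k0 - 1) (D - a) \<le> 2^(D-a)/2 * m^(if a = 1 then Suc k0 else k0)"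
        proof (cases "a = 1")
          case True then show ?thesis using less.IH[of "D-1"] D1 by simp
        next
          case False then show ?thesis using Suc.IH[of "D-a"] by simp
        qed
        thus "exp (t * (log 2 3 - real a)) * SW t (if a = 1 then Suc k0 else Suc k0 - 1) (D - a) \<le> b a"
          unfolding b_def by (intro mult_left_mono) auto
      qed
      also have "\<dots> \<le> b 1 + (\<Sum>a\<in>{2..<D}. b a)" by (rule sum_split1[OF bnn])
      also have "b 1 = E * u * (2^D/4) * m^Suc k0"
      proof -
        have "exp (t * (log 2 3 - real (1::nat))) = E * u" unfolding E_def u_def exp_split by simp
        moreover have "(2::real)^(D-1) = 2^D/2" using D1 by (simp add: power_diff)
        ultimately show ?thesis unfolding b_def by simp
      qed
      also have "(\<Sum>a\<in>{2..<D}. b a) = E * (2^D/2) * m^k0 * (\<Sum>a\<in>{2..<D}. (u/2)^a)"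
      proof -
        have "(\<Sum>a\<in>{2..<D}. b a) = (\<Sum>a\<in>{2..<D}. E * (2^D/2) * m^k0 * (u/2)^a)"
        proof (rule sum.cong)
          fix a assume a: "a \<in> {2..<D}"
          have "exp (t * (log 2 3 - real a)) = E * u^a" unfolding E_def u_def exp_split by simp
          moreover have "(2::real)^(D-a) = 2^D/2^a" using a by (simp add: power_diff)
          ultimately show "b a = E * (2^D/2) * m^k0 * (u/2)^a" unfolding b_def using a
            by (simp add: power_divide ac_simps)
        qed simp
        thus ?thesis by (simp add: sum_distrib_left)
      qed
      also have "E * (2^D/2) * m^k0 * (\<Sum>a\<in>{2..<D}. (u/2)^a) \<le> E * (2^D/2) * m^k0 * ((u/2)^2 / (1 - u/2))"
        using geo2[of "u/2" D] upos u2 Epos mpos by (intro mult_left_mono) auto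
      also have "E * u * (2^D/4) * m^Suc k0 + E * (2^D/2) * m^k0 * ((u/2)^2 / (1 - u/2))
             = 2^D/2 * m^k0 * (E * u * m / 2 + E * (u/2)^2 / (1 - u/2))"
        by (simp add: algebra_simps)
      also have "E * u * m / 2 + E * (u/2)^2 / (1 - u/2) = m"
        unfolding m_def using m_ident[OF u2 w2] by simp
      finally show ?thesis by (simp add: ac_simps)
    qed
  qed
qed


lemma ST_bound: "ST k D \<le> 5^(k+1) * (3/2)^D"
proof (induction k arbitrary: D)
  case 0 then show ?case using ST0 by simp
next
  case (Suc k0)
  show ?case
  proof (induction D rule: less_induct)
    case (less D)
    show ?case
    proof (cases "D = 0")
      case True then show ?thesis unfolding ST_def by (simp add: Od0)
    next
      case False
      hence D1: "D \<ge> 1" by simp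
      define b :: "nat \<Rightarrow> real" where "b a = 5^(if a = 1 then k0 + 2 else k0 + 1) * (3/2)^(D-a)" for a
      have bnn: "0 \<le> b a" for a unfolding b_def by simp
      have "ST (Suc k0) D \<le> 1 + (\<Sum>a\<in>{1..<D}. ST (if a = 1 then Suc k0 else Suc k0 - 1) (D - a))"
        using ST_rec[of "Suc k0" D] D1 by simp
      also have "\<dots> \<le> 1 + (\<Sum>a\<in>{1..<D}. b a)"
      proof (intro add_left_mono sum_mono)
        fix a assume a: "a \<in> {1..<D}"
        show "ST (if a = 1 then Suc k0 else Suc k0 - 1) (D - a) \<le> b a"
        proof (cases "a = 1")
          case True then show ?thesis using less.IH[of "D-1"] D1 unfolding b_def by simp
        next
          case False then show ?thesis using Suc.IH[of "D-a"] unfolding b_def by simp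
        qed
      qed
      also have "(\<Sum>a\<in>{1..<D}. b a) \<le> b 1 + (\<Sum>a\<in>{2..<D}. b a)" by (rule sum_split1[OF bnn])
      also have "b 1 = 5^(k0+1) * (3/2)^D * (10/3)"
      proof -
        have "(3/2::real)^(D-1) = (3/2)^D / (3/2)" using D1 by (simp add: power_diff)
        thus ?thesis unfolding b_def by simp
      qed
      also have "(\<Sum>a\<in>{2..<D}. b a) = 5^(k0+1) * (3/2)^D * (\<Sum>a\<in>{2..<D}. (2/3)^a)"
      proof -
        have "(\<Sum>a\<in>{2..<D}. b a) = (\<Sum>a\<in>{2..<D}. 5^(k0+1) * (3/2)^D * (2/3)^a)"
        proof (rule sum.cong)
          fix a assume a: "a \<in> {2..<D}"
          have "(3/2::real)^(D-a) = (3/2)^D / (3/2)^a" using a by (simp add: power_diff)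
          also have "\<dots> = (3/2)^D * (2/3)^a" by (simp add: power_divide)
          finally show "b a = 5^(k0+1) * (3/2)^D * (2/3)^a" unfolding b_def using a by simp
        qed simp
        thus ?thesis by (simp add: sum_distrib_left)
      qed
      also have "5^(k0+1) * (3/2)^D * (\<Sum>a\<in>{2..<D}. (2/3::real)^a) \<le> 5^(k0+1) * (3/2)^D * (4/3)"
      proof -
        have "(\<Sum>a\<in>{2..<D}. (2/3::real)^a) \<le> (2/3)^2 / (1 - 2/3)" by (rule geo2) auto
        thus ?thesis by (intro mult_left_mono) (auto simp: power2_eq_square)
      qed
      also have "1 + (5^(k0+1) * (3/2)^D * (10/3) + 5^(k0+1) * (3/2)^D * (4/3)) \<le> 5^(Suc k0+1) * (3/2::real)^D"
      proof -
        have h1: "(1::real) \<le> (3/2)^D" by (rule one_le_power) simp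
        have h2: "(5::real)^1 \<le> 5^(k0+1)" by (rule power_increasing) simp_all
        have "(5::real) * 1 \<le> 5^(k0+1) * (3/2)^D" using h2 h1 by (intro mult_mono) simp_all
        thus ?thesis by simp
      qed
      finally show ?thesis by simp
    qed
  qed
qed



lemma yform:
  assumes o: "odd n"
  shows "2^(\<Sum>i<j. aval n i) * (syr^^j) n \<le> 3^j * n + j * 3^j * 2^(\<Sum>i<j. aval n i)"
proof (induction j)
  case 0 then show ?case by simp
next
  case (Suc j)
  define A where "A = (\<Sum>i<j. aval n i)"
  define x where "x = (syr^^j) n"
  define a where "a = aval n j"
  have ax: "aval x 0 = a" unfolding x_def a_def using aval_shift[of j n 0] by simp
  have sx: "2^a * syr x = 3*x+1" using syr_eq[of x] ax by (simp add: aval0)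
  have IH: "2^A * x \<le> 3^j * n + j * 3^j * 2^A" using Suc unfolding A_def x_def .
  have "2^(\<Sum>i<Suc j. aval n i) * (syr^^Suc j) n = 2^A * (2^a * syr x)"
    unfolding A_def a_def x_def by (simp add: power_add)
  also have "\<dots> = 3 * (2^A * x) + 2^A" using sx by (simp add: algebra_simps)
  also have "\<dots> \<le> 3 * (3^j * n + j * 3^j * 2^A) + 2^A" using IH by simp
  also have "\<dots> \<le> 3^Suc j * n + Suc j * 3^Suc j * 2^(\<Sum>i<Suc j. aval n i)"
  proof -
    have A1: "(2::nat)^A \<le> 2^(\<Sum>i<Suc j. aval n i)" unfolding A_def by (intro power_increasing) auto
    have "3 * (j * 3^j * 2^A) \<le> j * 3^Suc j * 2^(\<Sum>i<Suc j. aval n i)" using A1 by simp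
    moreover have "(2::nat)^A \<le> 3^Suc j * 2^(\<Sum>i<Suc j. aval n i)"
      using A1 by (metis le_trans mult_le_mono1 mult_1 one_le_power zero_le_numeral nat_le_linear le_numeral_extra(3) one_le_numeral)
    moreover have "3 * (3^j * n + j * 3^j * 2^A) + 2^A = 3^Suc j * n + 3 * (j * 3^j * 2^A) + 2^A"
      by (simp add: algebra_simps)
    moreover have "Suc j * 3^Suc j * 2^(\<Sum>i<Suc j. aval n i) = j * 3^Suc j * 2^(\<Sum>i<Suc j. aval n i) + 3^Suc j * 2^(\<Sum>i<Suc j. aval n i)"
      by (simp add: algebra_simps)
    ultimately show ?thesis by linarith
  qed
  finally show ?case .
qed

lemma indicator_bound:
  assumes o: "odd n" and inN: "n \<le> after_cycles n k" and t: "t \<ge> 0"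
  shows "1 \<le> Wt t k D n + Tl k D n \<or> n \<le> D * 6^D"
proof (cases "Ac n k < D")
  case False then show ?thesis unfolding Tl_def Wt_def by simp
next
  case True
  define K where "K = cyc_steps n k"
  define A where "A = Ac n k"
  have KA: "K \<le> A" unfolding K_def A_def by (rule Ac_ge[OF o])
  have AD: "A < D" using True A_def by simp
  show ?thesis
  proof (cases "(2::nat)^A \<le> 3^K")
    case True
    have "log 2 (2^A) \<le> log 2 (3^K)" using True by (intro log_mono) (simp_all, metis of_nat_le_iff of_nat_numeral of_nat_power)
    hence "real A \<le> real K * log 2 3" by (simp add: log_nat_power log_pow_cancel)
    hence "0 \<le> t * (real K * log 2 3 - real A)" using t by simp
    hence "1 \<le> wt t k n" unfolding wt_def K_def A_def by simp
    thus ?thesis unfolding Wt_def using \<open>Ac n k < D\<close> by (simp add: Tl_def)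
  next
    case False
    have y: "2^A * after_cycles n k \<le> 3^K * n + K * 3^K * 2^A"
      using yform[OF o, of K] unfolding after_cycles_def A_def K_def Ac_def by simp
    have "2^A * n \<le> 2^A * after_cycles n k" using inN by simp
    with y have "2^A * n \<le> 3^K * n + K * 3^K * 2^A" by linarith
    moreover have "(3^K + 1) * n \<le> 2^A * n" using False by (intro mult_le_mono1) simp
    ultimately have "n \<le> K * 3^K * 2^A" by (simp add: algebra_simps)
    also have "\<dots> \<le> D * 3^D * 2^D"
      using KA AD by (intro mult_le_mono power_increasing) auto
    also have "\<dots> = D * 6^D" by (simp add: power_mult_distrib[symmetric])
    finally show ?thesis by simp
  qed
qed


lemma periodic_sum:
  fixes f :: "nat \<Rightarrow> real"
  assumes D: "D \<ge> 1" and nn: "\<And>n. 0 \<le> f n" and per: "\<And>n. odd n \<Longrightarrow> f (n mod 2^D) = f n"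
  shows "(\<Sum>n\<in>{n. odd n \<and> n \<le> N}. f n) \<le> real (N div 2^D + 1) * (\<Sum>\<rho>\<in>Od D. f \<rho>)"
proof -
  define Q where "Q = {..N div 2^D}"
  define h where "h = (\<lambda>(q::nat, \<rho>::nat). q * 2^D + \<rho>)"
  have sub: "{n. odd n \<and> n \<le> N} \<subseteq> h ` (Q \<times> Od D)"
  proof
    fix n assume n: "n \<in> {n. odd n \<and> n \<le> N}"
    have "n = h (n div 2^D, n mod 2^D)" unfolding h_def by (simp add: div_mult_mod_eq)
    moreover have "n div 2^D \<in> Q" unfolding Q_def using n by (simp add: div_le_mono)
    moreover have "n mod 2^D \<in> Od D" unfolding Od_def using n odd_mod[of n D] D by simp
    ultimately show "n \<in> h ` (Q \<times> Od D)" by blast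
  qed
  have inj: "inj_on h (Q \<times> Od D)"
  proof (rule inj_onI, clarify)
    fix q \<rho> q' \<rho>' assume r: "\<rho> \<in> Od D" "\<rho>' \<in> Od D" and e: "h (q, \<rho>) = h (q', \<rho>')"
    have l: "\<rho> < 2^D" "\<rho>' < 2^D" using r unfolding Od_def by auto
    have "(q * 2^D + \<rho>) div 2^D = (q' * 2^D + \<rho>') div 2^D" using e unfolding h_def by simp
    hence "q = q'" using l by simp
    moreover have "(q * 2^D + \<rho>) mod 2^D = (q' * 2^D + \<rho>') mod 2^D" using e unfolding h_def by simp
    hence "\<rho> = \<rho>'" using l by simp
    ultimately show "q = q' \<and> \<rho> = \<rho>'" by simp
  qed
  have fin: "finite (Q \<times> Od D)" unfolding Q_def by simp
  have "(\<Sum>n\<in>{n. odd n \<and> n \<le> N}. f n) \<le> (\<Sum>n\<in>h ` (Q \<times> Od D). f n)"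
    using sub fin nn by (intro sum_mono2) auto
  also have "\<dots> = (\<Sum>x\<in>Q \<times> Od D. f (h x))" using sum.reindex[OF inj, of f] by simp
  also have "\<dots> = (\<Sum>q\<in>Q. \<Sum>\<rho>\<in>Od D. f (h (q, \<rho>)))" by (simp add: sum.cartesian_product)
  also have "\<dots> = (\<Sum>q\<in>Q. \<Sum>\<rho>\<in>Od D. f \<rho>)"
  proof (intro sum.cong refl)
    fix q \<rho> assume r: "\<rho> \<in> Od D"
    have l: "\<rho> < 2^D" "odd \<rho>" using r unfolding Od_def by auto
    have ev: "even ((2::nat)^D)" using D by simp
    have "odd (q * 2^D + \<rho>)" using l ev by simp
    hence "f ((q * 2^D + \<rho>) mod 2^D) = f (q * 2^D + \<rho>)" by (rule per)
    moreover have "(q * 2^D + \<rho>) mod 2^D = \<rho>" using l by simp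
    ultimately show "f (h (q, \<rho>)) = f \<rho>" unfolding h_def by simp
  qed
  also have "\<dots> = real (N div 2^D + 1) * (\<Sum>\<rho>\<in>Od D. f \<rho>)" unfolding Q_def by simp
  finally show ?thesis .
qed

lemma count_bound:
  assumes A: "A \<subseteq> Nset k" and t: "t \<ge> 0" and D: "D \<ge> 1"
  shows "real (card {n\<in>A. odd n \<and> n \<le> N}) \<le> real (N div 2^D + 1) * (SW t k D + ST k D) + real (D * 6^D + 1)"
proof -
  define S where "S = {n\<in>A. odd n \<and> n \<le> N}"
  define B where "B = D * 6^D"
  define g where "g n = Wt t k D n + Tl k D n" for n
  have finS: "finite S" unfolding S_def by (rule finite_subset[of _ "{..N}"]) auto
  have SO: "S \<subseteq> {n. odd n \<and> n \<le> N}" unfolding S_def by auto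
  have gnn: "0 \<le> g n" for n unfolding g_def using Wt_nonneg Tl_nonneg by (simp add: add_nonneg_nonneg)
  have "real (card S) = (\<Sum>n\<in>S. 1)" by simp
  also have "\<dots> \<le> (\<Sum>n\<in>S. g n + (if n \<le> B then 1 else 0))"
  proof (rule sum_mono)
    fix n assume "n \<in> S"
    hence "n \<in> Nset k" using A unfolding S_def by auto
    hence "odd n" "n \<le> after_cycles n k" unfolding Nset_def by auto
    from indicator_bound[OF this t, of D] show "1 \<le> g n + (if n \<le> B then 1 else 0)"
      unfolding g_def B_def using gnn[of n] unfolding g_def by auto
  qed
  also have "\<dots> = (\<Sum>n\<in>S. g n) + (\<Sum>n\<in>S. (if n \<le> B then 1 else 0))" by (simp add: sum.distrib)
  also have "(\<Sum>n\<in>S. g n) \<le> (\<Sum>n\<in>{n. odd n \<and> n \<le> N}. g n)"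
    using SO gnn by (intro sum_mono2) auto
  also have "\<dots> \<le> real (N div 2^D + 1) * (\<Sum>\<rho>\<in>Od D. g \<rho>)"
    using D gnn by (intro periodic_sum) (simp_all add: g_def Wt_per Tl_per)
  also have "(\<Sum>\<rho>\<in>Od D. g \<rho>) = SW t k D + ST k D" unfolding g_def SW_def ST_def by (simp add: sum.distrib)
  also have "(\<Sum>n\<in>S. (if n \<le> B then 1 else 0)) = real (card {n\<in>S. n \<le> B})"
    using finS by (simp add: sum.inter_filter[symmetric])
  also have "card {n\<in>S. n \<le> B} \<le> card {..B}" by (intro card_mono) auto
  hence "real (card {n\<in>S. n \<le> B}) \<le> real (D * 6^D + 1)" unfolding B_def by (simp only: card_atMost of_nat_le_iff)
  finally show ?thesis unfolding S_def by simp
qed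



lemma div_le_real: "real (N div 2^D) \<le> real N / 2^D"
proof -
  have "(N div 2^D) * 2^D \<le> N" by (simp add: div_times_less_eq_dividend)
  hence "real ((N div 2^D) * 2^D) \<le> real N" by (rule of_nat_mono)
  thus ?thesis by (simp add: pos_le_divide_eq)
qed

lemma card_oddN: "real (card {n. odd n \<and> n \<le> N}) \<ge> real N / 2"
proof -
  have "{n. odd n \<and> n \<le> N} = {n. n < Suc N \<and> odd n}" by auto
  hence c: "card {n. odd n \<and> n \<le> N} = Suc N div 2" using card_odd_less by simp
  have "N \<le> 2 * (Suc N div 2)" by presburger
  hence "real N \<le> real (2 * (Suc N div 2))" by (rule of_nat_mono)
  thus ?thesis using c by simp
qed

lemma ratio_bound:
  fixes t :: real
  defines "E \<equiv> exp (t * log 2 3)" and "u \<equiv> exp (-t)"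
  defines "m \<equiv> E * u * u / ((2 - u) * (2 - E * u))"
  assumes u2: "u < 2" and w2: "E * u < 2"
  assumes A: "A \<subseteq> Nset k" and t: "t \<ge> 0" and D: "D \<ge> 1" and N: "N \<ge> 1"
  shows "real (card {n\<in>A. odd n \<and> n \<le> N}) / real (card {n. odd n \<and> n \<le> N})
     \<le> m^k + 2 * 5^(k+1) * (3/4)^D + 2 * (2^D/2 * m^k + 5^(k+1) * (3/2)^D + real (D * 6^D + 1)) / real N"
proof -
  define X where "X = m^k/2 + 5^(k+1) * (3/4::real)^D"
  define C where "C = 2^D/2 * m^k + 5^(k+1) * (3/2)^D + real (D * 6^D + 1)"
  have Epos: "E > 0" and upos: "u > 0" unfolding E_def u_def by simp_all
  have mpos: "m \<ge> 0" unfolding m_def using Epos upos u2 w2 by simp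
  have SW: "SW t k D \<le> 2^D/2 * m^k" using SW_bound[of t k D] u2 w2 unfolding E_def u_def m_def by simp
  have ST: "ST k D \<le> 5^(k+1) * (3/2)^D" by (rule ST_bound)
  have SWn: "0 \<le> SW t k D" unfolding SW_def by (intro sum_nonneg Wt_nonneg)
  have STn: "0 \<le> ST k D" unfolding ST_def by (intro sum_nonneg Tl_nonneg)
  have "real (card {n\<in>A. odd n \<and> n \<le> N}) \<le> real (N div 2^D + 1) * (SW t k D + ST k D) + real (D * 6^D + 1)"
    by (rule count_bound[OF A t D])
  also have "\<dots> \<le> (real N / 2^D + 1) * (2^D/2 * m^k + 5^(k+1) * (3/2)^D) + real (D * 6^D + 1)"
  proof -
    have "real (N div 2^D + 1) \<le> real N / 2^D + 1" using div_le_real[of N D] by simp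
    moreover have "SW t k D + ST k D \<le> 2^D/2 * m^k + 5^(k+1) * (3/2)^D" using SW ST by simp
    ultimately show ?thesis using SWn STn by (intro add_right_mono mult_mono) auto
  qed
  also have "\<dots> = real N * X + C"
  proof -
    have "(3/2::real)^D / 2^D = (3/4)^D" by (simp add: power_divide power_mult_distrib[symmetric])
    hence "real N / 2^D * (5^(k+1) * (3/2)^D) = real N * (5^(k+1) * (3/4)^D)"
      by (metis (no_types, lifting) mult.commute times_divide_eq_left times_divide_eq_right)
    moreover have "real N / 2^D * (2^D/2 * m^k) = real N * (m^k/2)" by simp
    ultimately show ?thesis unfolding X_def C_def by (simp add: algebra_simps)
  qed
  finally have num: "real (card {n\<in>A. odd n \<and> n \<le> N}) \<le> real N * X + C" .
  have den: "real N / 2 \<le> real (card {n. odd n \<and> n \<le> N})" by (rule card_oddN)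
  have Npos: "0 < real N / 2" using N by simp
  have Xn: "0 \<le> X" unfolding X_def using mpos by simp
  have Cn: "0 \<le> C" unfolding C_def using mpos by simp
  have "real (card {n\<in>A. odd n \<and> n \<le> N}) / real (card {n. odd n \<and> n \<le> N}) \<le> (real N * X + C) / (real N / 2)"
    using num den Npos Xn Cn by (intro frac_le) auto
  also have "\<dots> = 2 * X + 2 * C / real N" using N by (simp add: field_simps)
  finally show ?thesis unfolding X_def C_def by (simp add: algebra_simps)
qed


lemma density_bound:
  fixes t :: real
  defines "E \<equiv> exp (t * log 2 3)" and "u \<equiv> exp (-t)"
  defines "m \<equiv> E * u * u / ((2 - u) * (2 - E * u))"
  assumes u2: "u < 2" and w2: "E * u < 2"
  assumes A: "A \<subseteq> Nset k" and t: "t \<ge> 0"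
  shows "upper_density_odd A \<le> ereal (m^k)"
proof -
  define r where "r N = real (card {n\<in>A. odd n \<and> n \<le> N}) / real (card {n. odd n \<and> n \<le> N})" for N
  have ud: "upper_density_odd A = limsup (\<lambda>N. ereal (r N))" unfolding upper_density_odd_def r_def ..
  have bD: "upper_density_odd A \<le> ereal (m^k + 2 * 5^(k+1) * (3/4)^D)" if D: "D \<ge> 1" for D
  proof -
    define C where "C = 2^D/2 * m^k + 5^(k+1) * (3/2)^D + real (D * 6^D + 1)"
    define L where "L = m^k + 2 * 5^(k+1) * (3/4::real)^D"
    have ev: "eventually (\<lambda>N. ereal (r N) \<le> ereal (L + 2 * C / real N)) sequentially"
      unfolding eventually_sequentially
    proof (intro exI[of _ 1] allI impI)
      fix N :: nat assume "N \<ge> 1"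
      thus "ereal (r N) \<le> ereal (L + 2 * C / real N)"
        using ratio_bound[of t A k D N] u2 w2 A t D unfolding r_def L_def C_def E_def u_def m_def
        by simp
    qed
    have lim: "(\<lambda>N. ereal (L + 2 * C / real N)) \<longlonglongrightarrow> ereal L"
    proof -
      have "(\<lambda>N. L + 2 * C / real N) \<longlonglongrightarrow> L + 0"
        by (intro tendsto_add tendsto_const lim_const_over_n)
      thus ?thesis by (simp add: lim_ereal)
    qed
    have "limsup (\<lambda>N. ereal (r N)) \<le> limsup (\<lambda>N. ereal (L + 2 * C / real N))"
      by (rule Limsup_mono[OF ev])
    also have "\<dots> = ereal L" by (rule lim_imp_Limsup[OF trivial_limit_sequentially lim])
    finally show ?thesis unfolding ud L_def .
  qed
  have lim2: "(\<lambda>D. ereal (m^k + 2 * 5^(k+1) * (3/4::real)^D)) \<longlonglongrightarrow> ereal (m^k)"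
  proof -
    have "(\<lambda>D. m^k + 2 * 5^(k+1) * (3/4::real)^D) \<longlonglongrightarrow> m^k + 2 * 5^(k+1) * 0"
      by (intro tendsto_add tendsto_const tendsto_mult LIMSEQ_power_zero) simp
    thus ?thesis by (simp add: lim_ereal)
  qed
  show ?thesis
  proof (rule tendsto_le[OF trivial_limit_sequentially lim2 tendsto_const])
    show "eventually (\<lambda>D. upper_density_odd A \<le> ereal (m^k + 2 * 5^(k+1) * (3/4)^D)) sequentially"
      unfolding eventually_sequentially using bD by blast
  qed
qed



lemma geo_enn_fin:
  fixes c x :: real
  assumes "0 \<le> c" "0 \<le> x" "x < 1"
  shows "(\<Sum>n. ennreal (c * x^n)) = ennreal (c / (1 - x))"
proof -
  have "(\<lambda>n. c * x^n) sums (c * (1 / (1 - x)))"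
    using assms by (intro sums_mult geometric_sums) simp
  thus ?thesis using assms by (subst suminf_ennreal_eq) auto
qed

lemma geo_enn_inf:
  fixes c x :: real
  assumes c: "0 < c" and x: "1 \<le> x"
  shows "(\<Sum>n. ennreal (c * x^n)) = top"
proof (rule ccontr)
  define S where "S = (\<Sum>n. ennreal (c * x^n))"
  assume nt: "(\<Sum>n. ennreal (c * x^n)) \<noteq> top"
  hence St: "S \<noteq> top" unfolding S_def .
  define r where "r = enn2real S"
  have r0: "0 \<le> r" unfolding r_def by simp
  have Sr: "S = ennreal r" unfolding r_def using St by (simp add: ennreal_enn2real_if)
  have nn: "\<And>n. 0 \<le> c * x^n" using c x by simp
  have bound: "real N * c \<le> r" for N
  proof -
    have "(\<Sum>n<N. c) \<le> (\<Sum>n<N. c * x^n)"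
      using c x by (intro sum_mono) (simp add: one_le_power)
    hence "ennreal (real N * c) \<le> ennreal (\<Sum>n<N. c * x^n)" by (intro ennreal_leI) simp
    also have "ennreal (\<Sum>n<N. c * x^n) = (\<Sum>n<N. ennreal (c * x^n))" using nn by (simp add: sum_ennreal)
    also have "\<dots> \<le> S" unfolding S_def by (rule sum_le_suminf) auto
    finally have "ennreal (real N * c) \<le> ennreal r" using Sr by simp
    thus ?thesis using r0 by (simp add: ennreal_le_iff)
  qed
  obtain N where N: "r / c < real N" using reals_Archimedean2 by blast
  hence "r < real N * c" using c by (simp add: pos_divide_less_eq)
  thus False using bound[of N] by simp
qed

lemma MX_factor:
  fixes t :: real
  defines "E \<equiv> exp (t * log 2 3)" and "u \<equiv> exp (-t)"
  shows "MX t = (\<Sum>l. ennreal (E/2 * (E*u/2)^l)) * (\<Sum>k. ennreal (u^2/2 * (u/2)^k))"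
proof -
  have Epos: "E > 0" and upos: "u > 0" unfolding E_def u_def by simp_all
  have termeq: "(1/2)^(l+1) * (1/2)^(k+1) * exp (t * ((real l + 1) * log 2 3 - (real l + real (k+2))))
      = E/2 * (E*u/2)^l * (u^2/2 * (u/2)^k)" for l k
  proof -
    have "t * ((real l + 1) * log 2 3 - (real l + real (k+2))) = real (l+1) * (t * log 2 3) + real (l+k+2) * (-t)"
      by (simp add: algebra_simps)
    hence "exp (t * ((real l + 1) * log 2 3 - (real l + real (k+2)))) =
        exp (real (l+1) * (t * log 2 3) + real (l+k+2) * (-t))" by simp
    also have "\<dots> = E^(l+1) * u^(l+k+2)"
      unfolding E_def u_def by (simp only: exp_add exp_of_nat_mult)
    finally have "exp (t * ((real l + 1) * log 2 3 - (real l + real (k+2)))) = E^(l+1) * u^(l+k+2)" .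
    thus ?thesis by (simp add: power_add power_mult_distrib power_divide field_simps power2_eq_square)
  qed
  have sp: "ennreal (E/2 * (E*u/2)^l * (u^2/2 * (u/2)^k)) = ennreal (E/2 * (E*u/2)^l) * ennreal (u^2/2 * (u/2)^k)" for l k
    using Epos upos by (intro ennreal_mult) auto
  have "MX t = (\<Sum>l. \<Sum>k. ennreal (E/2 * (E*u/2)^l) * ennreal (u^2/2 * (u/2)^k))"
    unfolding MX_def termeq sp ..
  also have "\<dots> = (\<Sum>l. ennreal (E/2 * (E*u/2)^l) * (\<Sum>k. ennreal (u^2/2 * (u/2)^k)))"
    by (simp add: ennreal_suminf_cmult)
  also have "\<dots> = (\<Sum>l. ennreal (E/2 * (E*u/2)^l)) * (\<Sum>k. ennreal (u^2/2 * (u/2)^k))"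
    by (rule ennreal_suminf_multc)
  finally show ?thesis .
qed

lemma MX_closed:
  fixes t :: real
  defines "E \<equiv> exp (t * log 2 3)" and "u \<equiv> exp (-t)"
  assumes u2: "u < 2" and w2: "E * u < 2"
  shows "MX t = ennreal (E * u * u / ((2 - u) * (2 - E * u)))"
proof -
  have Epos: "E > 0" and upos: "u > 0" unfolding E_def u_def by simp_all
  have P: "(\<Sum>l. ennreal (E/2 * (E*u/2)^l)) = ennreal (E/2 / (1 - E*u/2))"
    using Epos upos w2 by (intro geo_enn_fin) auto
  have Q: "(\<Sum>k. ennreal (u^2/2 * (u/2)^k)) = ennreal (u^2/2 / (1 - u/2))"
    using Epos upos u2 by (intro geo_enn_fin) auto
  have "MX t = ennreal (E/2 / (1 - E*u/2)) * ennreal (u^2/2 / (1 - u/2))"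
    unfolding MX_factor E_def[symmetric] u_def[symmetric] P Q ..
  also have "\<dots> = ennreal (E/2 / (1 - E*u/2) * (u^2/2 / (1 - u/2)))"
    using Epos upos u2 w2 by (intro ennreal_mult[symmetric]) auto
  also have "E/2 / (1 - E*u/2) * (u^2/2 / (1 - u/2)) = E * u * u / ((2 - u) * (2 - E * u))"
    using u2 w2 by (simp add: field_simps power2_eq_square)
  finally show ?thesis .
qed

lemma MX_top:
  fixes t :: real
  defines "E \<equiv> exp (t * log 2 3)" and "u \<equiv> exp (-t)"
  assumes "\<not> (u < 2 \<and> E * u < 2)"
  shows "MX t = top"
proof -
  have Epos: "E > 0" and upos: "u > 0" unfolding E_def u_def by simp_all
  define P where "P = (\<Sum>l. ennreal (E/2 * (E*u/2)^l))"
  define Q where "Q = (\<Sum>k. ennreal (u^2/2 * (u/2)^k))"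
  have MX: "MX t = P * Q" unfolding P_def Q_def E_def u_def by (rule MX_factor)
  have P: "P = (if E*u < 2 then ennreal (E/2 / (1 - E*u/2)) else top)"
  proof (cases "E*u < 2")
    case True thus ?thesis unfolding P_def using Epos upos by (simp only: if_True, intro geo_enn_fin) auto
  next
    case False thus ?thesis unfolding P_def using Epos upos by (simp only: if_False, intro geo_enn_inf) auto
  qed
  have Q: "Q = (if u < 2 then ennreal (u^2/2 / (1 - u/2)) else top)"
  proof (cases "u < 2")
    case True thus ?thesis unfolding Q_def using Epos upos by (simp only: if_True, intro geo_enn_fin) auto
  next
    case False thus ?thesis unfolding Q_def using Epos upos by (simp only: if_False, intro geo_enn_inf) auto
  qed
  have P0: "P \<noteq> 0" using P Epos upos by auto
  have Q0: "Q \<noteq> 0" using Q Epos upos by auto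
  have "P = top \<or> Q = top" using P Q assms(3) by (simp split: if_splits)
  thus ?thesis
  proof
    assume "P = top" thus ?thesis using MX Q0 ennreal_top_mult_right by simp
  next
    assume "Q = top" thus ?thesis using MX P0 ennreal_top_mult_left by simp
  qed
qed



lemma log23_lt2: "log 2 3 < (2::real)"
proof -
  have "log 2 3 < log 2 (4::real)" by (subst log_less_cancel_iff) auto
  also have "log 2 (4::real) = 2" using log_pow_cancel[of "2::real" 2] by simp
  finally show ?thesis .
qed

lemma log23_ge: "4/3 \<le> log 2 (3::real)"
proof -
  have "log 2 (16::real) \<le> log 2 (27::real)" by (subst log_le_cancel_iff) auto
  moreover have "log 2 (16::real) = 4" using log_pow_cancel[of "2::real" 4] by simp
  moreover have "log 2 (27::real) = 3 * log 2 3" using log_nat_power[of "3::real" 2 3] by simp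
  ultimately show ?thesis by simp
qed

lemma m_ge1:
  fixes t :: real
  defines "E \<equiv> exp (t * log 2 3)" and "u \<equiv> exp (-t)"
  assumes t: "t < 0" and u2: "u < 2" and w2: "E * u < 2"
  shows "1 \<le> E * u * u / ((2 - u) * (2 - E * u))"
proof -
  define w where "w = E * u"
  have upos: "u > 0" and wpos: "w > 0" unfolding w_def E_def u_def by simp_all
  have "w * u = exp (t * log 2 3 + (-t) + (-t))" unfolding w_def E_def u_def by (simp only: exp_add)
  also have "t * log 2 3 + (-t) + (-t) = t * (log 2 3 - 2)" by (simp add: algebra_simps)
  finally have "w * u = exp (t * (log 2 3 - 2))" .
  moreover have "0 \<le> t * (log 2 3 - 2)" using t log23_lt2 by (intro mult_nonpos_nonpos) auto
  ultimately have wu1: "1 \<le> w * u" by simp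
  have "(u + w)^2 - 4 * (w * u) = (u - w)^2" by (simp add: power2_eq_square algebra_simps)
  moreover have "0 \<le> (u - w)^2" by simp
  ultimately have sq: "(u + w)^2 \<ge> 4 * (w * u)" by linarith
  have sq4: "4 \<le> (u + w)^2" using sq wu1 by linarith
  have uw2: "u + w \<ge> 2"
  proof (rule ccontr)
    assume "\<not> 2 \<le> u + w"
    hence "(u + w)^2 < 2^2" using upos wpos by (intro power_strict_mono) auto
    thus False using sq4 by simp
  qed
  have d: "(2 - u) * (2 - w) > 0" using u2 w2 w_def by simp
  have "(2 - u) * (2 - w) \<le> w * u" using uw2 by (simp add: algebra_simps)
  hence "1 \<le> w * u / ((2 - u) * (2 - w))" using d by simp
  thus ?thesis unfolding w_def by (simp add: mult.assoc)
qed

lemma m_ge8: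
  fixes t :: real
  defines "E \<equiv> exp (t * log 2 3)" and "u \<equiv> exp (-t)"
  assumes t: "t \<ge> 0" and u2: "u < 2" and w2: "E * u < 2"
  shows "1/8 \<le> E * u * u / ((2 - u) * (2 - E * u))"
proof -
  define w where "w = E * u"
  define c where "c = log 2 (3::real)"
  have upos: "u > 0" and wpos: "w > 0" unfolding w_def E_def u_def by simp_all
  have c43: "4/3 \<le> c" unfolding c_def by (rule log23_ge)
  have "w = exp (t * c + (-t))" unfolding w_def E_def u_def c_def by (simp only: exp_add)
  also have "t * c + (-t) = t * (c - 1)" by (simp add: algebra_simps)
  finally have wexp: "w = exp (t * (c - 1))" .
  have w1: "1 \<le> w" unfolding wexp using t c43 by simp
  have u1: "u \<le> 1" unfolding u_def using t by simp
  have "exp (t * (c - 1)) < exp (ln 2)" using w2 wexp w_def by simp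
  hence "t * (c - 1) < ln 2" by (simp only: exp_less_cancel_iff)
  moreover have "t * (2 - c) \<le> 2 * (t * (c - 1))"
  proof -
    have h: "t * (4/3) \<le> t * c" using c43 t by (rule mult_left_mono)
    have "t * (2 - c) = 2*t - t*c" "2 * (t * (c - 1)) = 2*(t*c) - 2*t" by (simp_all add: algebra_simps)
    thus ?thesis using h by linarith
  qed
  moreover have "t * (c - 2) = - (t * (2 - c))" by (simp add: algebra_simps)
  ultimately have "t * (c - 2) > - 2 * ln 2" by linarith
  hence e1: "exp (t * (c - 2)) > exp (- 2 * ln 2)" by (simp only: exp_less_cancel_iff)
  have e2: "exp (- 2 * ln (2::real)) = 1/4"
    by (simp add: exp_minus exp_of_nat_mult[of 2, simplified] power2_eq_square)
  have "w * u = exp (t * (c - 1) + (-t))" unfolding wexp u_def by (simp only: exp_add)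
  also have "t * (c - 1) + (-t) = t * (c - 2)" by (simp add: algebra_simps)
  finally have e3: "w * u = exp (t * (c - 2))" .
  have wu: "w * u > 1/4" using e1 e2 e3 by linarith
  have d: "(2 - u) * (2 - w) > 0" using u2 w2 w_def by simp
  have d2: "(2 - u) * (2 - w) \<le> 2 * 1" using upos w1 u2 w2 w_def
    by (intro mult_mono) auto
  have q: "w * u / ((2 - u) * (2 - w)) \<ge> w * u / 2" using d d2 wu by (intro divide_left_mono) simp_all
  have "w * u / ((2 - u) * (2 - w)) \<ge> 1/8" using q wu by linarith
  thus ?thesis unfolding w_def by (simp add: mult.assoc)
qed



lemma density_nonneg: "0 \<le> upper_density_odd A"
proof -
  have "Limsup sequentially (\<lambda>N. (0::ereal)) \<le> upper_density_odd A"
    unfolding upper_density_odd_def by (intro Limsup_mono) simp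
  thus ?thesis by (simp add: Limsup_const)
qed

lemma density_le1: "upper_density_odd A \<le> 1"
proof -
  have "upper_density_odd A \<le> Limsup sequentially (\<lambda>N. (1::ereal))"
    unfolding upper_density_odd_def
  proof (intro Limsup_mono always_eventually allI)
    fix N :: nat
    have fin: "finite {n. odd n \<and> n \<le> N}" by (rule finite_subset[of _ "{..N}"]) auto
    have "card {n\<in>A. odd n \<and> n \<le> N} \<le> card {n. odd n \<and> n \<le> N}"
      by (intro card_mono fin) auto
    hence "real (card {n\<in>A. odd n \<and> n \<le> N}) / real (card {n. odd n \<and> n \<le> N}) \<le> 1"
      by (cases "card {n. odd n \<and> n \<le> N} = 0") (auto simp: divide_le_eq_1)
    thus "ereal (real (card {n\<in>A. odd n \<and> n \<le> N}) / real (card {n. odd n \<and> n \<le> N})) \<le> 1"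
      by simp
  qed
  thus ?thesis by (simp add: Limsup_const)
qed

lemma m0_facts:
  defines "t0 \<equiv> ln 2 / 2 :: real"
  defines "E \<equiv> exp (t0 * log 2 3)" and "u \<equiv> exp (-t0)"
  shows "u < 2" "E * u < 2" "E * u * u / ((2 - u) * (2 - E * u)) < 1"
proof -
  define w where "w = E * u"
  have upos: "u > 0" and wpos: "w > 0" unfolding w_def E_def u_def by simp_all
  have ln3: "ln 2 * log 2 3 = ln (3::real)" by (simp add: log_def)
  have "u * u = exp (-t0 + -t0)" unfolding u_def by (simp only: exp_add)
  also have "-t0 + -t0 = - ln 2" unfolding t0_def by simp
  finally have u2: "u^2 = 1/2" by (simp add: power2_eq_square exp_minus)
  have "w = exp (t0 * log 2 3 + -t0)" unfolding w_def E_def u_def by (simp only: exp_add)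
  hence "w * w = exp ((t0 * log 2 3 + -t0) + (t0 * log 2 3 + -t0))" by (simp only: exp_add)
  also have "(t0 * log 2 3 + -t0) + (t0 * log 2 3 + -t0) = ln 3 - ln 2"
    unfolding t0_def using ln3 by (simp add: algebra_simps)
  finally have w2: "w^2 = 3/2" by (simp add: power2_eq_square exp_diff)
  have "(w * u)^2 = w^2 * u^2" by (simp add: power_mult_distrib)
  also have "\<dots> = 3/2 * (1/2)" by (simp only: u2 w2)
  finally have wu2: "(w * u)^2 = 3/4" by simp
  have ub: "u < 0.71" by (rule power_less_imp_less_base[of _ 2]) (simp_all only: u2, simp_all add: power2_eq_square)
  have wb: "w < 1.23" by (rule power_less_imp_less_base[of _ 2]) (simp_all only: w2, simp_all add: power2_eq_square)
  have wub: "w * u < 0.87" by (rule power_less_imp_less_base[of _ 2]) (simp_all only: wu2, simp_all add: power2_eq_square)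
  show "u < 2" using ub by simp
  show "E * u < 2" using wb w_def by simp
  have "1.29 * 0.77 < (2 - u) * (2 - w)" using ub wb by (intro mult_strict_mono) auto
  hence "w * u < (2 - u) * (2 - w)" using wub by simp
  moreover have "0 < (2 - u) * (2 - w)" using ub wb by simp
  ultimately have "w * u / ((2 - u) * (2 - w)) < 1" by simp
  thus "E * u * u / ((2 - u) * (2 - E * u)) < 1" unfolding w_def by (simp add: mult.assoc)
qed


definition mf :: "real \<Rightarrow> real" where
  "mf t = exp (t * log 2 3) * exp (-t) * exp (-t) / ((2 - exp (-t)) * (2 - exp (t * log 2 3) * exp (-t)))"

lemma fin_facts:
  assumes "MX t < top"
  shows "exp (-t) < 2 \<and> exp (t * log 2 3) * exp (-t) < 2 \<and> enn2real (MX t) = mf t \<and> 0 < mf t"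
proof -
  have c: "exp (-t) < 2 \<and> exp (t * log 2 3) * exp (-t) < 2"
  proof (rule ccontr)
    assume "\<not> (exp (-t) < 2 \<and> exp (t * log 2 3) * exp (-t) < 2)"
    hence "MX t = top" by (rule MX_top)
    thus False using assms by simp
  qed
  have pos: "0 < mf t" unfolding mf_def using c by simp
  have "MX t = ennreal (mf t)" unfolding mf_def using MX_closed c by blast
  thus ?thesis using c pos by simp
qed

lemma dens_t:
  assumes A: "A \<subseteq> Nset k" and fin: "MX t < top"
  shows "upper_density_odd A \<le> ereal (mf t ^ k)"
proof (cases "t \<ge> 0")
  case True
  show ?thesis unfolding mf_def using density_bound[OF _ _ A True] fin_facts[OF fin] by blast
next
  case False
  hence "1 \<le> mf t" unfolding mf_def using m_ge1 fin_facts[OF fin] by simp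
  hence "1 \<le> mf t ^ k" by (rule one_le_power)
  hence "(1::ereal) \<le> ereal (mf t ^ k)" by simp
  thus ?thesis using density_le1[of A] by (rule order_trans[rotated])
qed

lemma g_bound:
  assumes fin: "MX t < top"
  shows "- ln (enn2real (MX t)) \<le> ln 8"
proof -
  have f: "enn2real (MX t) = mf t" "0 < mf t" using fin_facts[OF fin] by auto
  have "1/8 \<le> mf t"
  proof (cases "t \<ge> 0")
    case True thus ?thesis unfolding mf_def using m_ge8 fin_facts[OF fin] by simp
  next
    case False
    hence "1 \<le> mf t" unfolding mf_def using m_ge1 fin_facts[OF fin] by simp
    thus ?thesis by simp
  qed
  hence "ln (1/8) \<le> ln (mf t)" using f by (subst ln_le_cancel_iff) auto
  moreover have "ln (1/8::real) = - ln 8" by (simp add: ln_div)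
  ultimately show ?thesis using f by simp
qed

lemma ereal_real_cases:
  assumes "0 \<le> v" "v \<le> 1"
  obtains r where "v = ereal r" "0 \<le> r"
  using assms by (cases v) auto

theorem mainTheorem2:
  shows "(\<forall>k\<ge>1. upper_density_odd (Nset k) \<le> ereal (exp (- I0 * real k)))
         \<and> upper_density_odd (\<Inter>k\<in>{1..}. Nset k) = 0"
proof
  define S where "S = {t. MX t < \<infinity>}"
  define g where "g t = - ln (enn2real (MX t))" for t
  have I0: "I0 = (SUP t\<in>S. g t)" unfolding I0_def S_def g_def ..
  have S0: "0 \<in> S"
  proof -
    have "exp (-0::real) < 2 \<and> exp (0 * log 2 3) * exp (-0::real) < 2" by simp
    hence "MX 0 = ennreal (mf 0)" unfolding mf_def using MX_closed[of 0] by simp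
    thus ?thesis unfolding S_def by simp
  qed
  have Sne: "S \<noteq> {}" using S0 by blast
  have bdd: "bdd_above (g ` S)"
    unfolding bdd_above_def g_def S_def using g_bound by (intro exI[of _ "ln 8"]) auto
  show "\<forall>k\<ge>1. upper_density_odd (Nset k) \<le> ereal (exp (- I0 * real k))"
  proof (intro allI impI)
    fix k :: nat assume k: "k \<ge> 1"
    obtain r where v: "upper_density_odd (Nset k) = ereal r" and r0: "0 \<le> r"
      using ereal_real_cases[OF density_nonneg density_le1] by blast
    have rb: "r \<le> mf t ^ k" if "t \<in> S" for t
      using dens_t[of "Nset k" k t] that v unfolding S_def by simp
    have "r \<le> exp (- I0 * real k)"
    proof (rule ccontr)
      assume "\<not> r \<le> exp (- I0 * real k)"
      hence lt: "exp (- I0 * real k) < r" by simp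
      hence rpos: "0 < r" by (smt (verit) exp_gt_zero)
      have "- I0 * real k < ln r" using lt rpos by (metis exp_less_cancel_iff exp_ln)
      hence "- ln r / real k < I0" using k by (simp add: field_simps)
      hence "\<exists>t\<in>S. - ln r / real k < g t" unfolding I0 using less_cSUP_iff[OF Sne bdd] by blast
      then obtain t where t: "t \<in> S" and lt2: "- ln r / real k < g t" by blast
      have f: "enn2real (MX t) = mf t" "0 < mf t" using fin_facts t unfolding S_def by auto
      have "- ln r < real k * g t" using lt2 k by (simp add: field_simps)
      hence "real k * ln (mf t) < ln r" unfolding g_def f by simp
      hence "exp (real k * ln (mf t)) < r" using rpos by (metis exp_less_cancel_iff exp_ln)
      moreover have "exp (real k * ln (mf t)) = mf t ^ k" using f(2) by (simp add: exp_of_nat_mult)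
      ultimately show False using rb[OF t] by simp
    qed
    thus "upper_density_odd (Nset k) \<le> ereal (exp (- I0 * real k))" using v by simp
  qed
  show "upper_density_odd (\<Inter>k\<in>{1..}. Nset k) = 0"
  proof -
    define t0 :: real where "t0 = ln 2 / 2"
    have mf0: "exp (-t0) < 2" "exp (t0 * log 2 3) * exp (-t0) < 2" "mf t0 < 1"
      unfolding t0_def mf_def using m0_facts by auto
    have mf0p: "0 \<le> mf t0" unfolding mf_def using mf0 by simp
    have t0p: "t0 \<ge> 0" unfolding t0_def by simp
    obtain r where v: "upper_density_odd (\<Inter>k\<in>{1..}. Nset k) = ereal r" and r0: "0 \<le> r"
      using ereal_real_cases[OF density_nonneg density_le1] by blast
    have rb: "r \<le> mf t0 ^ k" if "k \<ge> 1" for k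
    proof -
      have "(\<Inter>k\<in>{1..}. Nset k) \<subseteq> Nset k" using that by auto
      from density_bound[OF mf0(1,2) this t0p] show ?thesis using v unfolding mf_def by simp
    qed
    have "(\<lambda>k. mf t0 ^ k) \<longlonglongrightarrow> 0" using mf0 mf0p by (intro LIMSEQ_power_zero) simp
    hence "r \<le> 0"
      by (rule tendsto_le[OF trivial_limit_sequentially _ tendsto_const])
         (use rb in \<open>auto simp: eventually_sequentially\<close>)
    hence "r = 0" using r0 by simp
    thus ?thesis using v by (simp add: zero_ereal_def)
  qed
qed

end
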